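(* Let $f:[0,\infty)\to[0,\infty)$ be continuously differentiable with $f>0$ on $[t_0,\infty)$ for some $t_0\ge0$ and $f\in C^2([t_0,\infty))$, let $g=\log f$ on $[t_0,\infty)$, and assume condition (H1) of the context with the pair $(q,p)$. Then $\frac1p+\frac1q=1$, where $1/\infty=0$.
   Context: Condition (H1): (i) $g'(t)>0$ and $g''(t)>0$ for all $t\ge t_0$, and there is a pair $(q,p)$ with either $q=1$ and $p\in(0,\infty]$, or $q\in(1,\infty)$ and $p\in(0,\infty)$, such that $\lim_{t\to\infty}\frac{g'(t)^2}{g(t)g''(t)}=q$ and $\lim_{t\to\infty}\frac{tg'(t)}{g(t)}=p$; (ii) if $q=1$, then $tg'(t)/g(t)$ is nondecreasing on $[t_0,\infty)$ and there exist $k\in\mathbb{N}$ and $\hat g\in C^2([t_0,\infty))$ with $f=\exp_k\circ\hat g$ and $\hat g'/\hat g$ nonincreasing on $[t_0,\infty)$ ($\exp_1=\exp$, $\exp_k=\exp_{k-1}\circ\exp$). *)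

theory Defs
  imports "HOL-Analysis.Analysis"
begin

end

theory Submission
  imports Defs
begin

theorem lemma2p2:
  fixes f :: "real \<Rightarrow> real" and t0 q :: real and p :: ereal
    and g1 g2 :: "real \<Rightarrow> real"
  assumes t0: "t0 \<ge> 0"
    and f_C1: "\<exists>f'. (\<forall>t\<ge>0. (f has_real_derivative f' t) (at t within {0..}))
                     \<and> continuous_on {0..} f'"
    and f_nonneg: "\<forall>t\<ge>0. f t \<ge> 0"
    and f_pos: "\<forall>t\<ge>t0. f t > 0"
    and g1: "\<forall>t\<ge>t0. ((\<lambda>s. ln (f s)) has_real_derivative g1 t) (at t within {t0..})"
    and g2: "\<forall>t\<ge>t0. (g1 has_real_derivative g2 t) (at t within {t0..})"
    and g2_cont: "continuous_on {t0..} g2"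
    and H1_sign: "\<forall>t\<ge>t0. g1 t > 0 \<and> g2 t > 0"
    and H1_qp: "(q = 1 \<and> p > 0) \<or> (q > 1 \<and> 0 < p \<and> p < \<infinity>)"
    and H1_limq: "((\<lambda>t. (g1 t)\<^sup>2 / (ln (f t) * g2 t)) \<longlongrightarrow> q) at_top"
    and H1_limp: "((\<lambda>t. ereal (t * g1 t / ln (f t))) \<longlongrightarrow> p) at_top"
    and H1_ii: "q = 1 \<longrightarrow>
        (mono_on {t0..} (\<lambda>t. t * g1 t / ln (f t)) \<and>
         (\<exists>(k::nat) h h1 h2. k \<ge> 1
            \<and> (\<forall>t\<ge>t0. (h has_real_derivative h1 t) (at t within {t0..}))
            \<and> (\<forall>t\<ge>t0. (h1 has_real_derivative h2 t) (at t within {t0..}))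
            \<and> continuous_on {t0..} h2
            \<and> (\<forall>t\<ge>t0. f t = (exp ^^ k) (h t))
            \<and> (\<forall>s t. t0 \<le> s \<and> s \<le> t \<longrightarrow> h1 t / h t \<le> h1 s / h s)))"
  shows "1 / p + 1 / ereal q = 1"

proof -
  define h where "h = (\<lambda>t. ln (f t) / g1 t)"
  define L where "L = 1 - 1 / q"
  have q0: "q \<noteq> 0" using H1_qp by auto
  have pp: "p > 0" using H1_qp by auto
  have ev1: "eventually (\<lambda>t. ereal (t * g1 t / ln (f t)) > 0) at_top"
    using order_tendstoD(1)[OF H1_limp pp] by simp
  have evpos: "eventually (\<lambda>t. t > max t0 0 \<and> ln (f t) > 0 \<and> t * g1 t / ln (f t) > 0) at_top"
  proof -
    have "eventually (\<lambda>t. t > max t0 0) at_top" by (rule eventually_gt_at_top)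
    with ev1 show ?thesis
    proof (eventually_elim)
      case (elim t)
      hence tp: "t > 0" "t \<ge> t0" and r: "t * g1 t / ln (f t) > 0" by auto
      have "g1 t > 0" using H1_sign tp by auto
      hence "t * g1 t > 0" using tp by simp
      hence "ln (f t) > 0"
        using r \<open>t * g1 t > 0\<close> by (simp add: zero_less_divide_iff)
      thus ?case using elim by simp
    qed
  qed
  have derivh: "eventually (\<lambda>t. DERIV h t :> (g1 t * g1 t - ln (f t) * g2 t) / (g1 t * g1 t)) at_top"
    using eventually_gt_at_top[of t0]
  proof (rule eventually_mono)
    fix t assume tt: "t0 < t"
    hence tle: "t0 \<le> t" by simp
    have sub: "{t0<..} \<subseteq> {t0..}" by auto
    have a1: "((\<lambda>s. ln (f s)) has_real_derivative g1 t) (at t within {t0<..})"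
      by (rule DERIV_subset[OF g1[rule_format, OF tle] sub])
    have a2: "(g1 has_real_derivative g2 t) (at t within {t0<..})"
      by (rule DERIV_subset[OF g2[rule_format, OF tle] sub])
    have "g1 t > 0" using H1_sign tle by blast
    hence gn: "g1 t \<noteq> 0" by simp
    have "(h has_real_derivative (g1 t * g1 t - ln (f t) * g2 t) / (g1 t * g1 t)) (at t within {t0<..})"
      unfolding h_def by (rule DERIV_divide[OF a1 a2 gn])
    moreover have "at t within {t0<..} = at t" by (rule at_within_open) (use tt in auto)
    ultimately show "DERIV h t :> (g1 t * g1 t - ln (f t) * g2 t) / (g1 t * g1 t)" by simp
  qed
  have limd: "((\<lambda>t. (g1 t * g1 t - ln (f t) * g2 t) / (g1 t * g1 t) / 1) \<longlongrightarrow> L) at_top"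
  proof -
    have "((\<lambda>t. 1 - 1 / ((g1 t)\<^sup>2 / (ln (f t) * g2 t))) \<longlongrightarrow> 1 - 1 / q) at_top"
      by (intro tendsto_intros H1_limq q0)
    moreover have "eventually (\<lambda>t. 1 - 1 / ((g1 t)\<^sup>2 / (ln (f t) * g2 t)) = (g1 t * g1 t - ln (f t) * g2 t) / (g1 t * g1 t) / 1) at_top"
      using evpos
    proof eventually_elim
      case (elim t)
      have "g1 t > 0" "g2 t > 0" using H1_sign elim by auto
      thus ?case using elim by (simp add: field_simps power2_eq_square)
    qed
    ultimately show ?thesis unfolding L_def by (rule Lim_transform_eventually)
  qed
  have limh: "((\<lambda>t. h t / t) \<longlongrightarrow> L) at_top"
    by (rule lhospital_at_top_at_top[OF filterlim_ident _ derivh _ limd])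
       (auto intro!: derivative_eq_intros)
  show ?thesis
  proof (cases p)
    case (real p')
    hence p'0: "p' > 0" using pp by simp
    have "((\<lambda>t. t * g1 t / ln (f t)) \<longlongrightarrow> p') at_top"
      using H1_limp real by simp
    hence "((\<lambda>t. 1 / (t * g1 t / ln (f t))) \<longlongrightarrow> 1 / p') at_top"
      using p'0 by (intro tendsto_intros) auto
    moreover have "eventually (\<lambda>t. 1 / (t * g1 t / ln (f t)) = h t / t) at_top"
      using evpos by eventually_elim (simp add: h_def)
    ultimately have "((\<lambda>t. h t / t) \<longlongrightarrow> 1 / p') at_top"
      by (rule Lim_transform_eventually)
    hence "L = 1 / p'" by (rule tendsto_unique[OF trivial_limit_at_top_linorder limh])
    hence "q \<noteq> 1" using p'0 unfolding L_def by auto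
    hence "q > 1" using H1_qp by auto
    have "1 / p' + 1 / q = 1" using \<open>L = 1 / p'\<close> unfolding L_def by simp
    moreover have "1 / p = ereal (1 / p')" using real p'0 by (simp add: divide_ereal_def divide_inverse)
    moreover have "1 / ereal q = ereal (1 / q)" using \<open>q > 1\<close> by (simp add: divide_ereal_def divide_inverse)
    ultimately show ?thesis by (simp add: one_ereal_def)
  next
    case PInf
    hence "q = 1" using H1_qp by auto
    thus ?thesis using PInf by (simp add: one_ereal_def[symmetric])
  next
    case MInf thus ?thesis using pp by simp
  qed
qed

end
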